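(* Let $d\ge1$ and let $P(k)$, $k\ge d+1$, be the asymptotic degree distribution of the $d$-dimensional P-RAN, given by $P(d+1)=\frac12$ and $P(k)=\frac{dk-d^2-d+1}{dk-d^2+d+2}P(k-1)$ for $k>d+1$. Then the P-RAN is scale free with degree exponent $\gamma=\frac{2d+1}{d}$, in the sense that $$\lim_{k\to\infty}\frac{\log P(k)-\log P(k-1)}{\log k-\log(k-1)}=-\frac{2d+1}{d},$$ so that $P(k)\sim k^{-\gamma}$ for large $k$.
   Context: P-RAN process in dimension $d$: start from a complete graph on $d+2$ vertices with the list of its $d+2$ $(d+1)$-cliques; at each step a clique is chosen uniformly at random from the list, a new vertex is joined to its $d+1$ vertices, the chosen clique stays in the list and the $d+1$ new $(d+1)$-cliques containing the new vertex are appended. $P(k)$ is the limit as $t\to\infty$ of the expected fraction of vertices having degree $k$. *)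

theory Defs
  imports "HOL-Analysis.Analysis"
begin

text \<open>Asymptotic degree distribution of the d-dimensional P-RAN, defined by the
recurrence P(d+1) = 1/2 and
P(k) = (d k - d^2 - d + 1)/(d k - d^2 + d + 2) * P(k-1) for k > d+1.
PRAN_aux d n is P(d+1+n).\<close>

fun PRAN_aux :: "nat \<Rightarrow> nat \<Rightarrow> real" where
  "PRAN_aux d 0 = 1/2"
| "PRAN_aux d (Suc n) =
     (let k = real (d + 2 + n); r = real d in
       (r*k - r^2 - r + 1) / (r*k - r^2 + r + 2)) * PRAN_aux d n"

text \<open>P(k) for k \<ge> d+1 (values for k \<le> d are not used).\<close>
definition PRAN :: "nat \<Rightarrow> nat \<Rightarrow> real" where
  "PRAN d k = PRAN_aux d (k - (d + 1))"

end

theory Submission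
  imports Defs "HOL-Real_Asymp.Real_Asymp"
begin

lemma PRAN_aux_pos: "PRAN_aux d n > 0"
proof (induction n)
  case 0 then show ?case by simp
next
  case (Suc n)
  have num: "real d * real (d + 2 + n) - (real d)^2 - real d + 1 > 0"
    by (simp add: algebra_simps power2_eq_square add_pos_nonneg)
  have den: "real d * real (d + 2 + n) - (real d)^2 + real d + 2 > 0"
    by (simp add: algebra_simps power2_eq_square add_pos_nonneg)
  show ?case using Suc num den by (simp add: Let_def)
qed

lemma step:
  assumes "k \<ge> d + 2"
  shows "PRAN d k = (1 - (2*real d+1)/(real d * real k + (real d + 2 - (real d)^2))) * PRAN d (k - 1)"
proof -
  obtain n where n: "k = d + 2 + n" using assms le_Suc_ex by (metis add_2_eq_Suc' add_Suc_right nat_le_iff_add)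
  have e1: "k - (d+1) = Suc n" using n by simp
  have e2: "k - 1 - (d+1) = n" using n by simp
  have den: "real d * real (d + 2 + n) - (real d)^2 + real d + 2 > 0"
    by (simp add: algebra_simps power2_eq_square add_pos_nonneg)
  have "(real d * real (d + 2 + n) - (real d)^2 - real d + 1) / (real d * real (d + 2 + n) - (real d)^2 + real d + 2)
      = 1 - (2*real d+1)/(real d * real k + (real d + 2 - (real d)^2))"
    using den n by (simp add: field_simps)
  then show ?thesis unfolding PRAN_def e1 e2 by (simp add: Let_def)
qed

lemma asy: "((\<lambda>x::real. ln (1 - (2*r+1)/(r*x+b)) / (ln x - ln (x - 1))) \<longlongrightarrow> -((2*r+1) * inverse r)) at_top"
  if "r > 0" for r b :: real
  using that by real_asymp

theorem mainTheorem4: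
  fixes d :: nat
  assumes "d \<ge> 1"
  shows "(\<lambda>k. (ln (PRAN d k) - ln (PRAN d (k - 1))) / (ln (real k) - ln (real k - 1)))
           \<longlonglongrightarrow> - (2 * real d + 1) / real d"
proof -
  let ?r = "real d" and ?b = "real d + 2 - (real d)^2"
  have r: "?r > 0" using assms by simp
  have L: "((\<lambda>x::real. ln (1 - (2*?r+1)/(?r*x+?b)) / (ln x - ln (x - 1))) \<longlongrightarrow> - (2 * real d + 1) / real d) at_top"
  proof -
    have "-((2*?r+1) * inverse ?r) = - (2 * real d + 1) / real d" by (simp add: divide_inverse algebra_simps)
    then show ?thesis using asy[OF r, of ?b] by simp
  qed
  have T: "(\<lambda>k::nat. ln (1 - (2*?r+1)/(?r*real k+?b)) / (ln (real k) - ln (real k - 1)))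
           \<longlonglongrightarrow> - (2 * real d + 1) / real d"
    using filterlim_compose[OF L filterlim_real_sequentially] by (simp add: o_def)
  have ev: "\<forall>\<^sub>F k in sequentially.
      ln (1 - (2*?r+1)/(?r*real k+?b)) / (ln (real k) - ln (real k - 1))
      = (ln (PRAN d k) - ln (PRAN d (k - 1))) / (ln (real k) - ln (real k - 1))"
  proof (rule eventually_sequentiallyI[of "d+2"])
    fix k assume k: "d + 2 \<le> k"
    let ?q = "1 - (2*?r+1)/(?r*real k+?b)"
    have p1: "PRAN d (k-1) > 0" unfolding PRAN_def by (rule PRAN_aux_pos)
    have p2: "PRAN d k > 0" unfolding PRAN_def by (rule PRAN_aux_pos)
    have s: "PRAN d k = ?q * PRAN d (k-1)" by (rule step[OF k])
    have q: "?q > 0" using s p1 p2 by (simp add: zero_less_mult_iff)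
    have "ln (PRAN d k) = ln ?q + ln (PRAN d (k-1))" using s ln_mult_pos[OF q p1] by metis
    then show "ln ?q / (ln (real k) - ln (real k - 1))
      = (ln (PRAN d k) - ln (PRAN d (k - 1))) / (ln (real k) - ln (real k - 1))" by simp
  qed
  show ?thesis using Lim_transform_eventually[OF T ev] .
qed

end
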